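(* Let $\beta>0$. Suppose $\psi\in C^\infty(\mathbb{R})$ is supported on $[0,1]$ with $\|\psi\|_2=1$ and $\int\psi=0$, and let $m$ be a positive integer. For $1\le j\le m$ let $\psi_j(x)=m^{1/2}\psi(mx-j+1)$. For $\rho>0$ and $\kappa\in\{-1,1\}^m$ define $V_\kappa(x)=1+\rho\sum_{j=1}^m\kappa_j\psi_j(x)$ for $x\in[0,1]$. If $\rho m^{1/2+q}\|\psi^{(q)}\|_\infty\le1$ for all $q\in\{0,1,\dots,\lfloor\beta\rfloor\}$ and $\rho m^{1/2+\beta}\big(4\|\psi^{(\lfloor\beta\rfloor)}\|_\infty\vee2\|\psi^{(\lfloor\beta\rfloor+1)}\|_\infty\big)\le1$, then $V_\kappa\in\mathcal{V}_{1,\beta}(m^{1/2}\rho)$.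
   Context: $\mathcal{H}_\beta=\mathcal{H}_\beta(M)$: functions $g:[0,1]\to\mathbb{R}$ with $|g^{(\lfloor\beta\rfloor)}(x)-g^{(\lfloor\beta\rfloor)}(y)|\le M|x-y|^{\beta-\lfloor\beta\rfloor}$ for all $x,y\in[0,1]$ and $\|g^{(k)}\|_\infty\le M$ for $k=0,\dots,\lfloor\beta\rfloor$; $M$ is a fixed sufficiently large constant (in particular $M\ge1$). $\mathcal{V}_{1,\beta}(\varepsilon)=\{V\in\mathcal{H}_\beta:V\ge0,\ \|V-\bar V\mathbf 1\|_2\ge\varepsilon\}$ with $\bar V=\int_0^1V(x)dx$, $\mathbf1\equiv1$ on $[0,1]$, and $\|\cdot\|_2$ the $L^2([0,1])$ norm. *)

theory Defs
  imports "HOL-Analysis.Analysis"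
begin

definition kderiv :: "nat \<Rightarrow> (real \<Rightarrow> real) \<Rightarrow> real \<Rightarrow> real" where
  "kderiv k g = (deriv ^^ k) g"

definition smooth_real :: "(real \<Rightarrow> real) \<Rightarrow> bool" where
  "smooth_real g \<longleftrightarrow> (\<forall>k x. kderiv k g differentiable (at x))"

definition supnorm :: "(real \<Rightarrow> real) \<Rightarrow> real" where
  "supnorm g = (SUP x. \<bar>g x\<bar>)"

definition holder_class :: "real \<Rightarrow> real \<Rightarrow> (real \<Rightarrow> real) \<Rightarrow> bool" where
  "holder_class M \<beta> g \<longleftrightarrow>
     (\<forall>k < nat \<lfloor>\<beta>\<rfloor>. \<forall>x \<in> {0..1}.
        (kderiv k g has_real_derivative kderiv (Suc k) g x) (at x within {0..1})) \<and>
     (\<forall>k \<le> nat \<lfloor>\<beta>\<rfloor>. \<forall>x \<in> {0..1}. \<bar>kderiv k g x\<bar> \<le> M) \<and>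
     (\<forall>x \<in> {0..1}. \<forall>y \<in> {0..1}.
        \<bar>kderiv (nat \<lfloor>\<beta>\<rfloor>) g x - kderiv (nat \<lfloor>\<beta>\<rfloor>) g y\<bar>
          \<le> M * \<bar>x - y\<bar> powr (\<beta> - of_int \<lfloor>\<beta>\<rfloor>))"

definition mean01 :: "(real \<Rightarrow> real) \<Rightarrow> real" where
  "mean01 V = integral {0..1} V"

definition L2norm01 :: "(real \<Rightarrow> real) \<Rightarrow> real" where
  "L2norm01 f = sqrt (integral {0..1} (\<lambda>x. (f x)\<^sup>2))"

definition V_class :: "real \<Rightarrow> real \<Rightarrow> real \<Rightarrow> (real \<Rightarrow> real) \<Rightarrow> bool" where
  "V_class M \<beta> \<epsilon> V \<longleftrightarrow> holder_class M \<beta> V \<and> (\<forall>x \<in> {0..1}. V x \<ge> 0) \<and>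
     L2norm01 (\<lambda>x. V x - mean01 V) \<ge> \<epsilon>"

definition psi_j :: "(real \<Rightarrow> real) \<Rightarrow> nat \<Rightarrow> nat \<Rightarrow> real \<Rightarrow> real" where
  "psi_j \<psi> m j x = sqrt (real m) * \<psi> (real m * x - real j + 1)"

definition V_kappa :: "(real \<Rightarrow> real) \<Rightarrow> nat \<Rightarrow> real \<Rightarrow> (nat \<Rightarrow> real) \<Rightarrow> real \<Rightarrow> real" where
  "V_kappa \<psi> m \<rho> \<kappa> x = 1 + \<rho> * (\<Sum>j=1..m. \<kappa> j * psi_j \<psi> m j x)"

end

theory Submission imports Defs begin

lemma kderiv_Suc: "kderiv (Suc k) g = deriv (kderiv k g)"
  by (simp add: kderiv_def)

lemma kderiv_0: "kderiv 0 g = g"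
  by (simp add: kderiv_def)

lemma zero_ends:
  fixes f :: "real \<Rightarrow> real"
  assumes c: "continuous_on UNIV f" and z: "\<And>x. x \<notin> {0..1} \<Longrightarrow> f x = 0"
  shows "f 0 = 0 \<and> f 1 = 0"
proof -
  have cl: "closed {x. f x = 0}"
    using closed_Collect_eq[OF c, of "\<lambda>_. 0"] by simp
  have "{..<0} \<subseteq> {x. f x = (0::real)}" using z by auto
  hence "closure {..<(0::real)} \<subseteq> {x. f x = 0}" using cl closure_minimal by blast
  hence a: "f 0 = 0" by auto
  have "{1<..} \<subseteq> {x. f x = (0::real)}" using z by auto
  hence "closure {(1::real)<..} \<subseteq> {x. f x = 0}" using cl closure_minimal by blast
  hence "f 1 = 0" by auto
  with a show ?thesis by simp
qed

lemma kderiv_support: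
  assumes sm: "smooth_real \<psi>" and sup: "\<forall>x. x \<notin> {0..1} \<longrightarrow> \<psi> x = 0"
  shows "\<forall>x. x \<notin> {0<..<1} \<longrightarrow> kderiv k \<psi> x = 0"
proof (induction k)
  case 0
  have "continuous_on UNIV \<psi>"
    using sm unfolding smooth_real_def
    by (metis continuous_at_imp_continuous_on differentiable_imp_continuous_within kderiv_0)
  from zero_ends[OF this] sup have "\<psi> 0 = 0" "\<psi> 1 = 0" by auto
  show ?case
  proof (intro allI impI)
    fix x :: real assume "x \<notin> {0<..<1}"
    thus "kderiv 0 \<psi> x = 0" using sup \<open>\<psi> 0 = 0\<close> \<open>\<psi> 1 = 0\<close> unfolding kderiv_0
      by (smt (verit) atLeastAtMost_iff greaterThanLessThan_iff)
  qed
next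
  case (Suc k)
  have out: "kderiv (Suc k) \<psi> x = 0" if "x \<notin> {0..1}" for x
  proof -
    have os: "open ({..<0} \<union> {1<..} :: real set)" by auto
    have xs: "x \<in> {..<0} \<union> {1<..}" using that by auto
    have d0: "((\<lambda>_. 0) has_field_derivative 0) (at x)" by simp
    have eq: "\<And>y. y \<in> {..<0} \<union> {1<..} \<Longrightarrow> 0 = kderiv k \<psi> y" using Suc by auto
    from has_field_derivative_transform_within_open[OF d0 os xs eq]
    have "(kderiv k \<psi> has_field_derivative 0) (at x)" by simp
    thus ?thesis by (simp add: kderiv_Suc DERIV_imp_deriv)
  qed
  have "continuous_on UNIV (kderiv (Suc k) \<psi>)"
    using sm unfolding smooth_real_def
    by (metis continuous_at_imp_continuous_on differentiable_imp_continuous_within)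
  from zero_ends[OF this] out have "kderiv (Suc k) \<psi> 0 = 0" "kderiv (Suc k) \<psi> 1 = 0" by auto
  show ?case
  proof (intro allI impI)
    fix x :: real assume "x \<notin> {0<..<1}"
    thus "kderiv (Suc k) \<psi> x = 0" using out \<open>kderiv (Suc k) \<psi> 0 = 0\<close> \<open>kderiv (Suc k) \<psi> 1 = 0\<close>
      by (smt (verit) atLeastAtMost_iff greaterThanLessThan_iff)
  qed
qed

lemma kderiv_bounded:
  assumes sm: "smooth_real \<psi>" and sup: "\<forall>x. x \<notin> {0..1} \<longrightarrow> \<psi> x = 0"
  shows "\<bar>kderiv k \<psi> x\<bar> \<le> supnorm (kderiv k \<psi>)"
proof -
  let ?f = "kderiv k \<psi>"
  have c: "continuous_on {0..1} ?f"
    using sm unfolding smooth_real_def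
    by (meson continuous_at_imp_continuous_on differentiable_imp_continuous_within)
  have "compact (?f ` {0..1})" by (rule compact_continuous_image[OF c]) auto
  hence "bounded (?f ` {0..1})" by (rule compact_imp_bounded)
  then obtain a where a: "\<forall>y\<in>?f ` {0..1}. \<bar>y\<bar> \<le> a" by (auto simp: bounded_real)
  have "\<bar>?f y\<bar> \<le> max a 0" for y
    using a kderiv_support[OF sm sup, of k] by (cases "y \<in> {0..1}") (auto intro: max.coboundedI1)
  hence "bdd_above (range (\<lambda>y. \<bar>?f y\<bar>))" by (auto intro!: bdd_aboveI)
  thus ?thesis unfolding supnorm_def by (rule cSUP_upper[OF UNIV_I])
qed

lemma sum_single:
  fixes a :: "nat \<Rightarrow> real"
  assumes fin: "finite A" and u: "\<forall>j\<in>A. \<forall>k\<in>A. a j \<noteq> 0 \<longrightarrow> a k \<noteq> 0 \<longrightarrow> j = k"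
  shows "(\<exists>j\<in>A. sum a A = a j \<and> sum (\<lambda>j. (a j)^2) A = (a j)^2) \<or> (sum a A = 0 \<and> sum (\<lambda>j. (a j)^2) A = 0)"
proof (cases "\<exists>j\<in>A. a j \<noteq> 0")
  case True
  then obtain j where j: "j \<in> A" "a j \<noteq> 0" by blast
  have z: "\<forall>k\<in>A - {j}. a k = 0" using u j by blast
  have "sum a A = a j + sum a (A - {j})" by (rule sum.remove[OF fin j(1)])
  also have "sum a (A - {j}) = 0" using z by simp
  finally have 1: "sum a A = a j" by simp
  have "sum (\<lambda>j. (a j)^2) A = (a j)^2 + sum (\<lambda>j. (a j)^2) (A - {j})" by (rule sum.remove[OF fin j(1)])
  also have "sum (\<lambda>j. (a j)^2) (A - {j}) = 0" using z by simp
  finally have 2: "sum (\<lambda>j. (a j)^2) A = (a j)^2" by simp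
  show ?thesis using 1 2 j by blast
next
  case False
  thus ?thesis by simp
qed

lemma sum_single_abs:
  fixes a :: "nat \<Rightarrow> real"
  assumes fin: "finite A" and u: "\<forall>j\<in>A. \<forall>k\<in>A. a j \<noteq> 0 \<longrightarrow> a k \<noteq> 0 \<longrightarrow> j = k"
    and b: "\<And>j. j \<in> A \<Longrightarrow> \<bar>a j\<bar> \<le> B" and B: "0 \<le> B"
  shows "\<bar>sum a A\<bar> \<le> B"
  using sum_single[OF fin u] b B by auto

lemma sum_single_sq:
  fixes a :: "nat \<Rightarrow> real"
  assumes fin: "finite A" and u: "\<forall>j\<in>A. \<forall>k\<in>A. a j \<noteq> 0 \<longrightarrow> a k \<noteq> 0 \<longrightarrow> j = k"
  shows "(sum a A)^2 = sum (\<lambda>j. (a j)^2) A"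
  using sum_single[OF fin u] by auto

definition Dk :: "(real \<Rightarrow> real) \<Rightarrow> nat \<Rightarrow> real \<Rightarrow> (nat \<Rightarrow> real) \<Rightarrow> nat \<Rightarrow> real \<Rightarrow> real" where
  "Dk \<psi> m \<rho> \<kappa> k x = \<rho> * (\<Sum>j=1..m. \<kappa> j * (sqrt (real m) * (real m ^ k * kderiv k \<psi> (real m * x - real j + 1))))"

lemma Dk_deriv:
  assumes sm: "smooth_real \<psi>"
  shows "(Dk \<psi> m \<rho> \<kappa> k has_real_derivative Dk \<psi> m \<rho> \<kappa> (Suc k) x) (at x)"
proof -
  have d: "((\<lambda>x. kderiv k \<psi> (real m * x - real j + 1)) has_real_derivative
      kderiv (Suc k) \<psi> (real m * x - real j + 1) * real m) (at x)" for j
  proof -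
    have "(kderiv k \<psi> has_real_derivative kderiv (Suc k) \<psi> y) (at y)" for y
      using sm unfolding smooth_real_def kderiv_Suc
      by (simp add: DERIV_deriv_iff_real_differentiable)
    moreover have "((\<lambda>x. real m * x - real j + 1) has_real_derivative real m) (at x)"
      by (auto intro!: derivative_eq_intros)
    ultimately show ?thesis by (rule DERIV_chain2)
  qed
  show ?thesis unfolding Dk_def[abs_def]
    by (rule derivative_eq_intros d refl | simp)+
       (simp add: sum_distrib_left algebra_simps)
qed

lemma kderiv_V:
  assumes sm: "smooth_real \<psi>"
  shows "kderiv k (V_kappa \<psi> m \<rho> \<kappa>) = (\<lambda>x. (if k = 0 then 1 else 0) + Dk \<psi> m \<rho> \<kappa> k x)"
proof (induction k)
  case 0
  show ?case by (auto simp: kderiv_0 V_kappa_def Dk_def psi_j_def fun_eq_iff)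
next
  case (Suc k)
  have "deriv (\<lambda>x. (if k = 0 then 1 else 0) + Dk \<psi> m \<rho> \<kappa> k x) x = Dk \<psi> m \<rho> \<kappa> (Suc k) x" for x
    by (rule DERIV_imp_deriv) (auto intro!: derivative_eq_intros Dk_deriv[OF sm])
  thus ?case by (simp add: kderiv_Suc Suc fun_eq_iff)
qed

lemma uniq:
  fixes h :: "real \<Rightarrow> real" and c :: "nat \<Rightarrow> real"
  assumes hs: "\<forall>y. h y \<noteq> 0 \<longrightarrow> 0 < y \<and> y < 1"
  shows "\<forall>j\<in>A. \<forall>k\<in>A. c j * h (t - real j + 1) \<noteq> 0 \<longrightarrow> c k * h (t - real k + 1) \<noteq> 0 \<longrightarrow> j = k"
proof (intro ballI impI)
  fix j k assume "j \<in> A" "k \<in> A" and a: "c j * h (t - real j + 1) \<noteq> 0" and b: "c k * h (t - real k + 1) \<noteq> 0"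
  from a hs have 1: "real j - 1 < t \<and> t < real j" by force
  from b hs have 2: "real k - 1 < t \<and> t < real k" by force
  from 1 2 have "real j < real (k + 1)" "real k < real (j + 1)" by auto
  hence "j < k + 1" "k < j + 1" by (simp_all only: of_nat_less_iff)
  thus "j = k" by simp
qed

lemma supnorm_nonneg:
  assumes sm: "smooth_real \<psi>" and sup: "\<forall>x. x \<notin> {0..1} \<longrightarrow> \<psi> x = 0"
  shows "0 \<le> supnorm (kderiv k \<psi>)"
  using kderiv_bounded[OF sm sup, of k 0] by linarith

lemma Dk_bound:
  assumes sm: "smooth_real \<psi>" and sup: "\<forall>x. x \<notin> {0..1} \<longrightarrow> \<psi> x = 0"
    and kap: "\<forall>j \<in> {1..m}. \<kappa> j \<in> {-1, 1}" and rho: "\<rho> > 0"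
  shows "\<bar>Dk \<psi> m \<rho> \<kappa> k x\<bar> \<le> \<rho> * (sqrt (real m) * real m ^ k * supnorm (kderiv k \<psi>))"
proof -
  let ?a = "\<lambda>j. \<kappa> j * kderiv k \<psi> (real m * x - real j + 1)"
  have hs: "\<forall>y. kderiv k \<psi> y \<noteq> 0 \<longrightarrow> 0 < y \<and> y < 1"
    using kderiv_support[OF sm sup, of k] by auto
  have u: "\<forall>j\<in>{1..m}. \<forall>k\<in>{1..m}. ?a j \<noteq> 0 \<longrightarrow> ?a k \<noteq> 0 \<longrightarrow> j = k"
    by (rule uniq[OF hs])
  have b: "\<bar>?a j\<bar> \<le> supnorm (kderiv k \<psi>)" if "j \<in> {1..m}" for j
  proof -
    have "\<kappa> j \<in> {-1, 1}" using kap that by blast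
    hence "\<bar>\<kappa> j\<bar> = 1" by auto
    thus ?thesis using kderiv_bounded[OF sm sup] by (simp add: abs_mult)
  qed
  have s: "\<bar>sum ?a {1..m}\<bar> \<le> supnorm (kderiv k \<psi>)"
    by (rule sum_single_abs[OF _ u b supnorm_nonneg[OF sm sup]]) auto
  have "Dk \<psi> m \<rho> \<kappa> k x = \<rho> * (sqrt (real m) * real m ^ k) * sum ?a {1..m}"
    unfolding Dk_def by (simp add: sum_distrib_left algebra_simps)
  hence "\<bar>Dk \<psi> m \<rho> \<kappa> k x\<bar> = \<rho> * (sqrt (real m) * real m ^ k) * \<bar>sum ?a {1..m}\<bar>"
    using rho by (simp add: abs_mult)
  also have "\<dots> \<le> \<rho> * (sqrt (real m) * real m ^ k) * supnorm (kderiv k \<psi>)"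
    using s rho by (intro mult_left_mono) auto
  finally show ?thesis by (simp add: algebra_simps)
qed

lemma holder_abstract:
  fixes f f' :: "real \<Rightarrow> real" and m :: real
  assumes d: "\<And>z. (f has_real_derivative f' z) (at z)"
    and fA: "\<And>z. \<bar>f z\<bar> \<le> A" and fB: "\<And>z. \<bar>f' z\<bar> \<le> B"
    and al: "0 \<le> \<alpha>" "\<alpha> < 1" and m: "m > 0"
    and A: "A * m powr \<alpha> \<le> 1/4" and B: "B * m powr \<alpha> \<le> m/2" and M: "1/2 \<le> M"
  shows "\<bar>f x - f y\<bar> \<le> M * \<bar>x - y\<bar> powr \<alpha>"
proof -
  define d where "d = \<bar>x - y\<bar>"
  have mp: "m powr \<alpha> > 0" using m by simp
  show ?thesis
  proof (cases "d = 0")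
    case True thus ?thesis unfolding d_def by simp
  next
    case False
    hence dpos: "d > 0" unfolding d_def by simp
    have dpa: "d powr \<alpha> \<ge> 0" by simp
    show ?thesis
    proof (cases "d \<ge> 1/m")
      case True
      have "\<bar>f x - f y\<bar> \<le> 2 * A" using fA[of x] fA[of y] by linarith
      also have "2 * A \<le> (1/2) / m powr \<alpha>" using A mp by (simp add: field_simps)
      also have "(1/2) / m powr \<alpha> = (1/2) * (1/m) powr \<alpha>" using m by (simp add: powr_divide)
      also have "\<dots> \<le> (1/2) * d powr \<alpha>"
        using True al m by (intro mult_left_mono powr_mono2) auto
      also have "\<dots> \<le> M * d powr \<alpha>" using M dpa by (intro mult_right_mono) auto
      finally show ?thesis unfolding d_def .
    next
      case False
      have mvt: "\<bar>f x - f y\<bar> \<le> B * d"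
      proof -
        have gen: "\<bar>f b - f a\<bar> \<le> B * (b - a)" if "a < b" for a b
        proof -
          from MVT2[OF that, of f f'] d obtain z where "f b - f a = (b - a) * f' z" by blast
          hence "\<bar>f b - f a\<bar> = (b - a) * \<bar>f' z\<bar>" using that by (simp add: abs_mult)
          also have "\<dots> \<le> (b - a) * B" using fB[of z] that by (intro mult_left_mono) auto
          finally show ?thesis by (simp add: algebra_simps)
        qed
        show ?thesis
        proof (cases "x < y")
          case True thus ?thesis using gen[OF True] unfolding d_def by (simp add: abs_minus_commute)
        next
          case False
          hence "y < x" using dpos unfolding d_def by auto
          thus ?thesis using gen[OF \<open>y < x\<close>] unfolding d_def by simp
        qed
      qed
      have B0: "B \<ge> 0" using fB[of 0] by linarith
      have "B * d \<le> (m/2) / m powr \<alpha> * d" using B mp dpos by (intro mult_right_mono) (auto simp: field_simps)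
      also have "(m/2) / m powr \<alpha> = (1/2) * m powr (1 - \<alpha>)" using m by (simp add: powr_diff)
      also have "(1/2) * m powr (1 - \<alpha>) * d = (1/2) * (d powr \<alpha> * (m * d) powr (1 - \<alpha>))"
      proof -
        have "d powr \<alpha> * d powr (1 - \<alpha>) = d" using dpos by (simp add: powr_add[symmetric])
        thus ?thesis by (simp add: powr_mult algebra_simps)
      qed
      also have "\<dots> \<le> (1/2) * (d powr \<alpha> * 1)"
        using False m dpos al by (intro mult_left_mono powr_le1) (auto simp: field_simps)
      also have "\<dots> \<le> M * d powr \<alpha>" using mult_right_mono[OF M dpa] by simp
      finally show ?thesis using mvt unfolding d_def by linarith
    qed
  qed
qed

lemma shift_int:
  fixes f :: "real \<Rightarrow> real"
  assumes fi: "(f has_integral I) UNIV" and sup: "\<forall>x. x \<notin> {0..1} \<longrightarrow> f x = 0"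
    and m: "m > 0" and j: "j \<in> {1..m}"
  shows "((\<lambda>x. f (real m * x - real j + 1)) has_integral I / real m) {0..1}"
proof -
  have "(\<lambda>x. if x \<in> {0..1} then f x else 0) = f" using sup by auto
  with fi have f01: "(f has_integral I) (cbox 0 1)"
    using has_integral_restrict_UNIV[of "{0..1}" f I] by simp
  have mpos: "real m > 0" using m by simp
  from has_integral_affinity'[OF f01 mpos, of "1 - real j"]
  have "((\<lambda>x. f (real m * x + (1 - real j))) has_integral I / real m)
          (cbox ((0 - (1 - real j)) / real m) ((1 - (1 - real j)) / real m))"
    by (simp add: divide_inverse mult.commute)
  hence h: "((\<lambda>x. f (real m * x - real j + 1)) has_integral I / real m)
          {(real j - 1) / real m .. real j / real m}"
    by (simp add: algebra_simps)
  show ?thesis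
  proof (rule has_integral_on_superset[OF h])
    fix x assume "x \<notin> {(real j - 1) / real m .. real j / real m}"
    hence "real m * x - real j + 1 \<notin> {0..1}" using mpos by (auto simp: field_simps)
    thus "f (real m * x - real j + 1) = 0" using sup by auto
  next
    have "real j \<le> real m" "1 \<le> real j" using j by auto
    thus "{(real j - 1) / real m .. real j / real m} \<subseteq> {0..1}"
      using mpos by (auto simp: field_simps)
  qed
qed

lemma main:
  fixes \<beta> \<rho> M :: real and \<psi> :: "real \<Rightarrow> real" and m :: nat and \<kappa> :: "nat \<Rightarrow> real"
  assumes M: "M \<ge> 2" and beta: "\<beta> > 0" and sm: "smooth_real \<psi>"
    and sup: "\<forall>x. x \<notin> {0..1} \<longrightarrow> \<psi> x = 0"
    and sq: "((\<lambda>x. (\<psi> x)\<^sup>2) has_integral 1) UNIV" and int0: "(\<psi> has_integral 0) UNIV"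
    and m: "m > 0" and rho: "\<rho> > 0" and kap: "\<forall>j \<in> {1..m}. \<kappa> j \<in> {-1, 1}"
    and hq: "\<forall>q \<le> nat \<lfloor>\<beta>\<rfloor>. \<rho> * real m powr (1/2 + real q) * supnorm (kderiv q \<psi>) \<le> 1"
    and hb: "\<rho> * real m powr (1/2 + \<beta>) *
        max (4 * supnorm (kderiv (nat \<lfloor>\<beta>\<rfloor>) \<psi>)) (2 * supnorm (kderiv (nat \<lfloor>\<beta>\<rfloor> + 1) \<psi>)) \<le> 1"
  shows "V_class M \<beta> (sqrt (real m) * \<rho>) (V_kappa \<psi> m \<rho> \<kappa>)"
proof -
  let ?V = "V_kappa \<psi> m \<rho> \<kappa>"
  let ?D = "Dk \<psi> m \<rho> \<kappa>"
  define s where "s = nat \<lfloor>\<beta>\<rfloor>"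
  define S where "S q = supnorm (kderiv q \<psi>)" for q
  have mpos: "real m > 0" using m by simp
  have pw: "real m powr (1/2 + real q) = sqrt (real m) * real m ^ q" for q
    using mpos by (simp add: powr_add powr_realpow powr_half_sqrt)
  have DkB: "\<bar>?D k x\<bar> \<le> \<rho> * (sqrt (real m) * real m ^ k * S k)" for k x
    unfolding S_def by (rule Dk_bound[OF sm sup kap rho])
  have hqk: "\<rho> * (sqrt (real m) * real m ^ k * S k) \<le> 1" if "k \<le> s" for k
  proof -
    have "\<rho> * real m powr (1/2 + real k) * S k \<le> 1" using hq that unfolding s_def S_def by blast
    thus ?thesis unfolding pw by (simp add: algebra_simps)
  qed
  have kV: "kderiv k ?V = (\<lambda>x. (if k = 0 then 1 else 0) + ?D k x)" for k
    by (rule kderiv_V[OF sm])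
  have Sn: "S q \<ge> 0" for q unfolding S_def by (rule supnorm_nonneg[OF sm sup])
  have hol: "holder_class M \<beta> ?V"
    unfolding holder_class_def
  proof (intro conjI ballI allI impI)
    fix k x assume "k < nat \<lfloor>\<beta>\<rfloor>" "x \<in> {0..1::real}"
    have "((\<lambda>x. (if k = 0 then 1 else 0) + ?D k x) has_real_derivative (0 + ?D (Suc k) x)) (at x)"
      by (intro derivative_intros Dk_deriv[OF sm])
    hence "((\<lambda>x. (if k = 0 then 1 else 0) + ?D k x) has_real_derivative (0 + ?D (Suc k) x)) (at x within {0..1})"
      by (rule has_field_derivative_at_within)
    thus "(kderiv k ?V has_real_derivative kderiv (Suc k) ?V x) (at x within {0..1})"
      by (simp add: kV)
  next
    fix k x assume k: "k \<le> nat \<lfloor>\<beta>\<rfloor>" "x \<in> {0..1::real}"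
    have "\<bar>?D k x\<bar> \<le> 1" using DkB[of k x] hqk[of k] k unfolding s_def by linarith
    hence "\<bar>(if k = 0 then 1 else 0) + ?D k x\<bar> \<le> 2" by auto
    thus "\<bar>kderiv k ?V x\<bar> \<le> M" using M by (simp add: kV)
  next
    fix x y :: real assume "x \<in> {0..1}" "y \<in> {0..1}"
    define \<alpha> where "\<alpha> = \<beta> - of_int \<lfloor>\<beta>\<rfloor>"
    have al: "0 \<le> \<alpha>" "\<alpha> < 1" unfolding \<alpha>_def by linarith+
    have fl: "real s = of_int \<lfloor>\<beta>\<rfloor>" unfolding s_def using beta by simp
    have mpb: "real m powr (1/2 + \<beta>) = sqrt (real m) * real m ^ s * real m powr \<alpha>"
    proof -
      have "1/2 + \<beta> = (1/2 + real s) + \<alpha>" unfolding \<alpha>_def fl by simp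
      hence "real m powr (1/2 + \<beta>) = real m powr (1/2 + real s) * real m powr \<alpha>"
        by (simp add: powr_add)
      thus ?thesis using pw[of s] by simp
    qed
    have hb': "\<rho> * real m powr (1/2 + \<beta>) * (4 * S s) \<le> 1" "\<rho> * real m powr (1/2 + \<beta>) * (2 * S (Suc s)) \<le> 1"
    proof -
      have "0 \<le> \<rho> * real m powr (1/2 + \<beta>)" using rho by simp
      hence "\<rho> * real m powr (1/2 + \<beta>) * (4 * S s) \<le> \<rho> * real m powr (1/2 + \<beta>) * max (4 * S s) (2 * S (Suc s))"
        "\<rho> * real m powr (1/2 + \<beta>) * (2 * S (Suc s)) \<le> \<rho> * real m powr (1/2 + \<beta>) * max (4 * S s) (2 * S (Suc s))"
        by (intro mult_left_mono; simp)+
      moreover have "\<rho> * real m powr (1/2 + \<beta>) * max (4 * S s) (2 * S (Suc s)) \<le> 1"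
        using hb unfolding S_def s_def by simp
      ultimately show "\<rho> * real m powr (1/2 + \<beta>) * (4 * S s) \<le> 1" "\<rho> * real m powr (1/2 + \<beta>) * (2 * S (Suc s)) \<le> 1"
        by linarith+
    qed
    have A: "\<rho> * (sqrt (real m) * real m ^ s * S s) * real m powr \<alpha> \<le> 1/4"
      using hb'(1) unfolding mpb by (simp add: algebra_simps)
    have B: "\<rho> * (sqrt (real m) * real m ^ Suc s * S (Suc s)) * real m powr \<alpha> \<le> real m / 2"
    proof -
      have "\<rho> * (sqrt (real m) * real m ^ Suc s * S (Suc s)) * real m powr \<alpha>
          = real m * (\<rho> * real m powr (1/2 + \<beta>) * S (Suc s))"
        unfolding mpb by (simp add: algebra_simps)
      also have "\<dots> \<le> real m * (1/2)" using hb'(2) mpos by (intro mult_left_mono) auto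
      finally show ?thesis by simp
    qed
    have "\<bar>?D s x - ?D s y\<bar> \<le> M * \<bar>x - y\<bar> powr \<alpha>"
      by (rule holder_abstract[OF Dk_deriv[OF sm] DkB DkB al mpos A B]) (use M in simp)
    thus "\<bar>kderiv (nat \<lfloor>\<beta>\<rfloor>) ?V x - kderiv (nat \<lfloor>\<beta>\<rfloor>) ?V y\<bar> \<le> M * \<bar>x - y\<bar> powr (\<beta> - of_int \<lfloor>\<beta>\<rfloor>)"
      unfolding s_def \<alpha>_def by (simp add: kV)
  qed
  have nonneg: "\<forall>x \<in> {0..1}. ?V x \<ge> 0"
  proof
    fix x :: real
    have "?V x = 1 + ?D 0 x" using kV[of 0] by (simp add: kderiv_0 fun_eq_iff)
    moreover have "\<bar>?D 0 x\<bar> \<le> 1" using DkB[of 0 x] hqk[of 0] by simp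
    ultimately show "?V x \<ge> 0" by linarith
  qed
  have psij: "((\<lambda>x. \<kappa> j * psi_j \<psi> m j x) has_integral 0) {0..1}" if j: "j \<in> {1..m}" for j
  proof -
    have "((\<lambda>x. \<psi> (real m * x - real j + 1)) has_integral 0 / real m) {0..1}"
      by (rule shift_int[OF int0 sup m j])
    from has_integral_mult_right[OF this, of "\<kappa> j * sqrt (real m)"]
    show ?thesis by (simp add: psi_j_def mult.assoc)
  qed
  have Vint: "(?V has_integral 1) {0..1}"
  proof -
    have "((\<lambda>x. \<Sum>j=1..m. \<kappa> j * psi_j \<psi> m j x) has_integral (\<Sum>j=1..m. 0)) {0..1}"
      by (rule has_integral_sum) (auto intro: psij)
    from has_integral_mult_right[OF this, of \<rho>]
    have "((\<lambda>x. \<rho> * (\<Sum>j=1..m. \<kappa> j * psi_j \<psi> m j x)) has_integral 0) {0..1}" by simp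
    from has_integral_add[OF has_integral_const_real[of "1::real" 0 1] this]
    show ?thesis by (simp add: V_kappa_def[abs_def])
  qed
  have mean: "mean01 ?V = 1" unfolding mean01_def using Vint by (rule integral_unique)
  have pt: "(?V x - mean01 ?V)\<^sup>2 = \<rho>\<^sup>2 * (\<Sum>j=1..m. real m * (\<psi> (real m * x - real j + 1))\<^sup>2)" for x
  proof -
    let ?a = "\<lambda>j. (\<kappa> j * sqrt (real m)) * \<psi> (real m * x - real j + 1)"
    have hs: "\<forall>y. \<psi> y \<noteq> 0 \<longrightarrow> 0 < y \<and> y < 1"
      using kderiv_support[OF sm sup, of 0] by (auto simp: kderiv_0)
    have u: "\<forall>j\<in>{1..m}. \<forall>k\<in>{1..m}. ?a j \<noteq> 0 \<longrightarrow> ?a k \<noteq> 0 \<longrightarrow> j = k"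
      by (rule uniq[OF hs])
    have "?V x - mean01 ?V = \<rho> * sum ?a {1..m}"
      unfolding mean by (simp add: V_kappa_def psi_j_def mult.assoc)
    hence "(?V x - mean01 ?V)\<^sup>2 = \<rho>\<^sup>2 * (sum ?a {1..m})\<^sup>2" by (simp add: power_mult_distrib)
    also have "(sum ?a {1..m})\<^sup>2 = sum (\<lambda>j. (?a j)\<^sup>2) {1..m}"
      by (rule sum_single_sq[OF _ u]) simp
    also have "sum (\<lambda>j. (?a j)\<^sup>2) {1..m} = (\<Sum>j=1..m. real m * (\<psi> (real m * x - real j + 1))\<^sup>2)"
    proof (rule sum.cong[OF refl])
      fix j assume "j \<in> {1..m}"
      hence "\<kappa> j \<in> {-1, 1}" using kap by blast
      hence "(\<kappa> j)\<^sup>2 = 1" by auto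
      thus "(?a j)\<^sup>2 = real m * (\<psi> (real m * x - real j + 1))\<^sup>2"
        by (simp add: power_mult_distrib)
    qed
    finally show ?thesis .
  qed
  have sqint: "((\<lambda>x. (?V x - mean01 ?V)\<^sup>2) has_integral \<rho>\<^sup>2 * real m) {0..1}"
  proof -
    have sup2: "\<forall>x. x \<notin> {0..1} \<longrightarrow> (\<psi> x)\<^sup>2 = 0" using sup by simp
    have "((\<lambda>x. real m * (\<psi> (real m * x - real j + 1))\<^sup>2) has_integral 1) {0..1}" if j: "j \<in> {1..m}" for j
    proof -
      have "((\<lambda>x. (\<psi> (real m * x - real j + 1))\<^sup>2) has_integral 1 / real m) {0..1}"
        by (rule shift_int[OF sq sup2 m j])
      from has_integral_mult_right[OF this, of "real m"] show ?thesis using mpos by simp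
    qed
    hence "((\<lambda>x. \<Sum>j=1..m. real m * (\<psi> (real m * x - real j + 1))\<^sup>2) has_integral (\<Sum>j=1..m. 1)) {0..1}"
      by (intro has_integral_sum) auto
    from has_integral_mult_right[OF this, of "\<rho>\<^sup>2"]
    show ?thesis unfolding pt by simp
  qed
  have "L2norm01 (\<lambda>x. ?V x - mean01 ?V) = sqrt (\<rho>\<^sup>2 * real m)"
    unfolding L2norm01_def using integral_unique[OF sqint] by simp
  also have "\<dots> = sqrt (real m) * \<rho>" using rho by (simp add: real_sqrt_mult)
  finally have L2: "L2norm01 (\<lambda>x. ?V x - mean01 ?V) \<ge> sqrt (real m) * \<rho>" by simp
  show ?thesis unfolding V_class_def using hol nonneg L2 by blast
qed

theorem proposition7p2:
  "\<exists>M0::real. M0 \<ge> 1 \<and>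
    (\<forall>M \<ge> M0. \<forall>(\<beta>::real) (\<psi>::real \<Rightarrow> real) (m::nat) (\<rho>::real) (\<kappa>::nat \<Rightarrow> real).
      \<beta> > 0 \<longrightarrow>
      smooth_real \<psi> \<longrightarrow>
      (\<forall>x. x \<notin> {0..1} \<longrightarrow> \<psi> x = 0) \<longrightarrow>
      ((\<lambda>x. (\<psi> x)\<^sup>2) has_integral 1) UNIV \<longrightarrow>
      (\<psi> has_integral 0) UNIV \<longrightarrow>
      m > 0 \<longrightarrow>
      \<rho> > 0 \<longrightarrow>
      (\<forall>j \<in> {1..m}. \<kappa> j \<in> {-1, 1}) \<longrightarrow>
      (\<forall>q \<le> nat \<lfloor>\<beta>\<rfloor>. \<rho> * real m powr (1/2 + real q) * supnorm (kderiv q \<psi>) \<le> 1) \<longrightarrow>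
      \<rho> * real m powr (1/2 + \<beta>) *
        max (4 * supnorm (kderiv (nat \<lfloor>\<beta>\<rfloor>) \<psi>)) (2 * supnorm (kderiv (nat \<lfloor>\<beta>\<rfloor> + 1) \<psi>)) \<le> 1
      \<longrightarrow> V_class M \<beta> (sqrt (real m) * \<rho>) (V_kappa \<psi> m \<rho> \<kappa>))"
  by (rule exI[of _ 2]) (auto intro!: main)

end
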